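(* Let $m\ge1$ and $y\in\mathbb{R}^{2m+1}_+$. Then $$\min_{x\in\mathbb{R}^{m+1}_+}\mathcal{I}(y\|x*x)=\min_{\mathbf{Y}\in\boldsymbol{\mathcal{Y}},\,\mathbf{W}\in\boldsymbol{\mathcal{W}}}\mathcal{I}(\mathbf{Y}\|\mathbf{W}).$$
   Context: For $x\in\mathbb{R}^{m+1}$ set $x_k=0$ for $k<0$, $k>m$, and $(x*x)_i=\sum_{j=0}^i x_{i-j}x_j$, $i=0,\dots,2m$. Matrices are indexed by rows $i=0,\dots,2m$ and columns $j=0,\dots,m$. $\boldsymbol{\mathcal{Y}}$ is the set of $\mathbf{Y}\in\mathbb{R}^{(2m+1)\times(m+1)}_+$ with $\mathbf{Y}_{ij}=0$ for $i<j$ and $i>j+m$ and with row sums $\sum_j\mathbf{Y}_{ij}=y_i$. $\boldsymbol{\mathcal{W}}$ is the set of matrices with $\mathbf{W}_{ij}=x_{i-j}x_j$ for $0\le j\le m$, $j\le i\le j+m$, and $\mathbf{W}_{ij}=0$ otherwise, for some $x\in\mathbb{R}^{m+1}_+$. For nonnegative arrays $M,N$ of the same size, $\mathcal{I}(M\|N)=\sum\big(M\log\frac{M}{N}-M+N\big)$ entrywise summed (convention $0\log0=0$; $+\infty$ if some entry has $M>0=N$). *)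

theory Defs
  imports Complex_Main "HOL-Library.Extended_Real"
begin

(* Vectors x in R^{m+1} are functions nat => real, only indices 0..m matter;
   entries with index > m are treated as 0 (convention x_k = 0 for k > m). *)
definition ext :: "nat \<Rightarrow> (nat \<Rightarrow> real) \<Rightarrow> nat \<Rightarrow> real" where
  "ext m x k = (if k \<le> m then x k else 0)"

definition conv :: "nat \<Rightarrow> (nat \<Rightarrow> real) \<Rightarrow> nat \<Rightarrow> real" where
  "conv m x i = (\<Sum>j=0..i. ext m x (i - j) * ext m x j)"

definition ient :: "real \<Rightarrow> real \<Rightarrow> ereal" where
  "ient M N = (if M = 0 then ereal N
               else if N = 0 then \<infinity>
               else ereal (M * ln (M / N) - M + N))"

definition idiv :: "'a set \<Rightarrow> ('a \<Rightarrow> real) \<Rightarrow> ('a \<Rightarrow> real) \<Rightarrow> ereal" where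
  "idiv A M N = (\<Sum>a\<in>A. ient (M a) (N a))"

definition matidx :: "nat \<Rightarrow> (nat \<times> nat) set" where
  "matidx m = {0..2*m} \<times> {0..m}"

definition Ycal :: "nat \<Rightarrow> (nat \<Rightarrow> real) \<Rightarrow> (nat \<Rightarrow> nat \<Rightarrow> real) set" where
  "Ycal m y = {Y. (\<forall>i\<le>2*m. \<forall>j\<le>m. Y i j \<ge> 0 \<and> ((i < j \<or> i > j + m) \<longrightarrow> Y i j = 0))
                 \<and> (\<forall>i\<le>2*m. (\<Sum>j=0..m. Y i j) = y i)}"

definition Wcal :: "nat \<Rightarrow> (nat \<Rightarrow> nat \<Rightarrow> real) set" where
  "Wcal m = {W. \<exists>x. (\<forall>k\<le>m. x k \<ge> 0) \<and>
                 (\<forall>i\<le>2*m. \<forall>j\<le>m. W i j = (if j \<le> i \<and> i \<le> j + m then x (i - j) * x j else 0))}"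

end

theory Submission
  imports Defs "HOL-Analysis.Analysis"
begin

lemma ln_half: "(u::real) > 0 \<Longrightarrow> ln u \<le> u/2"
proof -
  assume u: "u > 0"
  have "ln (u/2) \<le> u/2 - 1" using u by (intro ln_le_minus_one) auto
  moreover have "ln (u/2) = ln u - ln 2" using u by (simp add: ln_div)
  moreover have "ln (2::real) < 1" using ln_less_self[of 2] by (smt (verit) ln_2_less_1)
  ultimately show ?thesis by linarith
qed

lemma ient_nonneg: "M \<ge> 0 \<Longrightarrow> N \<ge> 0 \<Longrightarrow> 0 \<le> ient M N"
proof -
  assume M: "M \<ge> 0" and N: "N \<ge> 0"
  show ?thesis
  proof (cases "M = 0 \<or> N = 0")
    case True then show ?thesis using N by (auto simp: ient_def)
  next
    case False
    then have Mp: "M > 0" and Np: "N > 0" using M N by auto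
    have "ln (N/M) \<le> N/M - 1" using Mp Np by (intro ln_le_minus_one) auto
    then have "M * ln (N/M) \<le> M * (N/M - 1)" using Mp by (simp add: mult_left_mono)
    also have "\<dots> = N - M" using Mp by (simp add: field_simps)
    finally have "M * ln (N/M) \<le> N - M" .
    moreover have "ln (M/N) = - ln (N/M)" using Mp Np by (simp add: ln_div)
    ultimately show ?thesis using Mp Np by (auto simp: ient_def)
  qed
qed

lemma ient_lower: "M \<ge> 0 \<Longrightarrow> N \<ge> 0 \<Longrightarrow> ereal (N/2 - M) \<le> ient M N"
proof -
  assume M: "M \<ge> 0" and N: "N \<ge> 0"
  show ?thesis
  proof (cases "M = 0 \<or> N = 0")
    case True then show ?thesis using N M by (auto simp: ient_def)
  next
    case False
    then have Mp: "M > 0" and Np: "N > 0" using M N by auto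
    have "ln (N/M) \<le> (N/M)/2" using Mp Np by (intro ln_half) auto
    then have "M * ln (N/M) \<le> M * ((N/M)/2)" using Mp by (intro mult_left_mono) auto
    also have "\<dots> = N/2" using Mp by (simp add: field_simps)
    finally have "M * ln (N/M) \<le> N/2" .
    moreover have "ln (M/N) = - ln (N/M)" using Mp Np by (simp add: ln_div)
    ultimately show ?thesis using Mp Np by (auto simp: ient_def)
  qed
qed

lemma ln_ge_one_minus_inv: "(u::real) > 0 \<Longrightarrow> 1 - 1/u \<le> ln u"
proof -
  assume u: "u > 0"
  have "ln (1/u) \<le> 1/u - 1" using u by (intro ln_le_minus_one) auto
  moreover have "ln (1/u) = - ln u" using u by (simp add: ln_div)
  ultimately show ?thesis by linarith
qed

lemma logsum2:
  fixes a b c d :: real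
  assumes "a > 0" "b > 0" "c > 0" "d > 0"
  shows "(a+b) * ln ((a+b)/(c+d)) \<le> a * ln (a/c) + b * ln (b/d)"
proof -
  define s where "s = a + b"
  define t where "t = c + d"
  have sp: "s > 0" "t > 0" using assms by (auto simp: s_def t_def)
  have l1: "ln (a * t / (c * s)) \<ge> 1 - (c * s) / (a * t)"
    using ln_ge_one_minus_inv[of "a * t / (c * s)"] assms sp by (simp add: field_simps)
  have l2: "ln (b * t / (d * s)) \<ge> 1 - (d * s) / (b * t)"
    using ln_ge_one_minus_inv[of "b * t / (d * s)"] assms sp by (simp add: field_simps)
  have e1: "ln (a * t / (c * s)) = ln (a/c) - ln (s/t)"
    using assms sp by (simp add: ln_div ln_mult)
  have e2: "ln (b * t / (d * s)) = ln (b/d) - ln (s/t)"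
    using assms sp by (simp add: ln_div ln_mult)
  have "a * ln (a * t / (c * s)) \<ge> a * (1 - (c * s) / (a * t))" using l1 assms by (simp add: mult_left_mono)
  moreover have "b * ln (b * t / (d * s)) \<ge> b * (1 - (d * s) / (b * t))" using l2 assms by (simp add: mult_left_mono)
  moreover have "a * (1 - (c * s) / (a * t)) + b * (1 - (d * s) / (b * t)) = 0"
  proof -
    have "a * (1 - (c * s) / (a * t)) = a - c * s / t" using assms sp by (simp add: field_simps)
    moreover have "b * (1 - (d * s) / (b * t)) = b - d * s / t" using assms sp by (simp add: field_simps)
    moreover have "c * s / t + d * s / t = s" using sp by (simp add: t_def add_divide_distrib[symmetric] distrib_right[symmetric])
    ultimately show ?thesis by (simp add: s_def)
  qed
  ultimately have "a * (ln (a/c) - ln (s/t)) + b * (ln (b/d) - ln (s/t)) \<ge> 0"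
    unfolding e1[symmetric] e2[symmetric] by linarith
  then show ?thesis unfolding s_def[symmetric] t_def[symmetric] by (simp add: s_def algebra_simps)
qed

lemma ient_subadd:
  fixes a b c d :: real
  assumes a: "a \<ge> 0" and b: "b \<ge> 0" and c: "c \<ge> 0" and d: "d \<ge> 0"
  shows "ient (a+b) (c+d) \<le> ient a c + ient b d"
proof -
  have n1: "ient a c \<ge> 0" and n2: "ient b d \<ge> 0" using ient_nonneg a b c d by auto
  consider "a = 0" "b = 0" | "a = 0" "b > 0" "d = 0" | "a = 0" "b > 0" "d > 0"
    | "a > 0" "c = 0" | "a > 0" "c > 0" "b = 0" | "a > 0" "c > 0" "b > 0" "d = 0"
    | "a > 0" "c > 0" "b > 0" "d > 0"
    using a b c d by (auto simp: less_eq_real_def)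
  then show ?thesis
  proof cases
    case 1 then show ?thesis by (simp add: ient_def)
  next
    case 2 then show ?thesis using n1 by (simp add: ient_def)
  next
    case 3
    have "ln (b/(c+d)) \<le> ln (b/d)" using 3 c by (intro ln_mono) (auto simp: frac_le)
    then have "b * ln (b/(c+d)) \<le> b * ln (b/d)" using 3 by (intro mult_left_mono) auto
    then show ?thesis using 3 c by (simp add: ient_def)
  next
    case 4 then show ?thesis using n2 by (simp add: ient_def)
  next
    case 5
    have "ln (a/(c+d)) \<le> ln (a/c)" using 5 d by (intro ln_mono) (auto simp: frac_le)
    then have "a * ln (a/(c+d)) \<le> a * ln (a/c)" using 5 by (intro mult_left_mono) auto
    then show ?thesis using 5 d by (simp add: ient_def)
  next
    case 6 then show ?thesis using n1 by (simp add: ient_def)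
  next
    case 7
    have "(a+b) * ln ((a+b)/(c+d)) \<le> a * ln (a/c) + b * ln (b/d)" using 7 by (intro logsum2) auto
    then show ?thesis using 7 by (simp add: ient_def)
  qed
qed

lemma ient_sum:
  fixes A :: "'a set"
  assumes "finite A" "\<And>k. k \<in> A \<Longrightarrow> a k \<ge> 0" "\<And>k. k \<in> A \<Longrightarrow> c k \<ge> 0"
  shows "ient (\<Sum>k\<in>A. a k) (\<Sum>k\<in>A. c k) \<le> (\<Sum>k\<in>A. ient (a k) (c k))"
  using assms
proof (induction A rule: finite_induct)
  case empty then show ?case by (simp add: ient_def)
next
  case (insert x F)
  have "ient (\<Sum>k\<in>insert x F. a k) (\<Sum>k\<in>insert x F. c k) = ient (a x + (\<Sum>k\<in>F. a k)) (c x + (\<Sum>k\<in>F. c k))"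
    using insert by simp
  also have "\<dots> \<le> ient (a x) (c x) + ient (\<Sum>k\<in>F. a k) (\<Sum>k\<in>F. c k)"
    using insert by (intro ient_subadd) (auto intro: sum_nonneg)
  also have "\<dots> \<le> ient (a x) (c x) + (\<Sum>k\<in>F. ient (a k) (c k))"
    using insert by (intro add_left_mono) auto
  also have "\<dots> = (\<Sum>k\<in>insert x F. ient (a k) (c k))" using insert by simp
  finally show ?case .
qed

lemma ient_cont: assumes M: "M \<ge> 0" shows "continuous_on {0..} (ient M)"
proof (cases "M = 0")
  case True
  have "ient M = (\<lambda>N. ereal N)" using True by (auto simp: ient_def)
  then show ?thesis by (auto intro!: continuous_intros)
next
  case False
  then have Mp: "M > 0" using M by auto
  define g where "g = (\<lambda>N. M * ln (M / N) - M + N)"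
  have eq: "\<And>N. N > 0 \<Longrightarrow> ient M N = ereal (g N)" using Mp by (simp add: ient_def g_def)
  have c1: "continuous_on {0<..} (\<lambda>N. ereal (g N))"
    unfolding g_def using Mp by (auto intro!: continuous_intros)
  have c2: "continuous_on {0<..} (ient M)"
    using continuous_on_cong[OF refl, of "{0<..}" "ient M" "\<lambda>N. ereal (g N)"] eq c1 by auto
  have lim0: "(ient M \<longlongrightarrow> ient M 0) (at 0 within {0..})"
  proof -
    have f1: "filterlim (\<lambda>N. - ln N) at_top (at_right (0::real))"
      by (subst filterlim_uminus_at_top) (simp add: ln_at_0)
    have f2: "filterlim (\<lambda>N. M * (- ln N)) at_top (at_right (0::real))"
      by (rule filterlim_tendsto_pos_mult_at_top[OF tendsto_const Mp f1])
    have t: "((\<lambda>N. M * ln M - M + N) \<longlongrightarrow> M * ln M - M + 0) (at_right (0::real))"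
      by (intro tendsto_intros)
    have f3: "filterlim (\<lambda>N. (M * ln M - M + N) + M * (- ln N)) at_top (at_right (0::real))"
      by (rule filterlim_tendsto_add_at_top[OF t f2])
    have ev: "eventually (\<lambda>N. (M * ln M - M + N) + M * (- ln N) = g N) (at_right (0::real))"
      by (rule eventually_mono[OF eventually_at_right_less]) (use Mp in \<open>simp add: g_def ln_div right_diff_distrib\<close>)
    have "filterlim g at_top (at_right 0)" using filterlim_cong[OF refl refl ev] f3 by simp
    then have lim1: "((\<lambda>N. ereal (g N)) \<longlongrightarrow> \<infinity>) (at_right 0)" by (simp add: tendsto_PInfty_eq_at_top)
    have ev2: "eventually (\<lambda>N. ereal (g N) = ient M N) (at_right 0)"
      by (rule eventually_mono[OF eventually_at_right_less]) (simp add: eq)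
    have "(ient M \<longlongrightarrow> \<infinity>) (at_right 0)" using tendsto_cong[OF ev2] lim1 by simp
    moreover have "ient M 0 = \<infinity>" using Mp by (simp add: ient_def)
    ultimately show ?thesis by (simp add: at_within_Ici_at_right)
  qed
  show ?thesis unfolding continuous_on_def
  proof
    fix N :: real assume N: "N \<in> {0..}"
    show "(ient M \<longlongrightarrow> ient M N) (at N within {0..})"
    proof (cases "N = 0")
      case True then show ?thesis using lim0 by simp
    next
      case False
      then have "N \<in> {0<..}" using N by auto
      then have "isCont (ient M) N" using c2 continuous_on_eq_continuous_at[of "{0<..}" "ient M"] by (simp add: open_greaterThan)
      then show ?thesis unfolding isCont_def by (rule tendsto_within_subset) auto
    qed
  qed
qed

lemma tendsto_sum_ereal:
  fixes f :: "'i \<Rightarrow> 'a \<Rightarrow> ereal"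
  assumes "finite A" "\<And>i. i \<in> A \<Longrightarrow> (f i \<longlongrightarrow> L i) F" "\<And>i. i \<in> A \<Longrightarrow> L i \<ge> 0"
  shows "((\<lambda>x. \<Sum>i\<in>A. f i x) \<longlongrightarrow> (\<Sum>i\<in>A. L i)) F"
  using assms
proof (induction A rule: finite_induct)
  case empty then show ?case by simp
next
  case (insert a A)
  have "((\<lambda>x. f a x + (\<Sum>i\<in>A. f i x)) \<longlongrightarrow> L a + (\<Sum>i\<in>A. L i)) F"
  proof (rule tendsto_add_ereal_nonneg)
    show "L a \<noteq> -\<infinity>" using insert(5)[of a] by auto
    have "(\<Sum>i\<in>A. L i) \<ge> 0" using insert(5) by (auto intro: sum_nonneg)
    then show "(\<Sum>i\<in>A. L i) \<noteq> -\<infinity>" by auto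
  qed (use insert in auto)
  then show ?case using insert by simp
qed

lemma ext_cont: "continuous_on UNIV (\<lambda>x. ext m x k)"
  by (cases "k \<le> m") (auto simp: ext_def)

lemma conv_cont: "continuous_on UNIV (\<lambda>x. conv m x i)"
  unfolding conv_def by (intro continuous_intros ext_cont)

lemma compact_box:
  fixes B :: "nat \<Rightarrow> real set"
  assumes "\<And>k. compact (B k)"
  shows "compact (Pi\<^sub>E UNIV B)"
proof -
  have "compactin (product_topology (\<lambda>_. euclidean) UNIV) (Pi\<^sub>E UNIV B)"
    using assms by (subst compactin_PiE) auto
  then show ?thesis by (simp add: euclidean_product_topology)
qed

lemma single_le_sum_ereal:
  fixes f :: "'a \<Rightarrow> ereal"
  assumes "finite A" "i \<in> A" "\<And>x. x \<in> A \<Longrightarrow> 0 \<le> f x"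
  shows "f i \<le> sum f A"
proof -
  have "sum f A = f i + sum f (A - {i})" using assms by (simp add: sum.remove)
  moreover have "sum f (A - {i}) \<ge> 0" using assms by (auto intro: sum_nonneg)
  ultimately show ?thesis by (simp add: add_increasing2)
qed

lemma ext_nonneg: "(\<forall>k\<le>m. x k \<ge> 0) \<Longrightarrow> ext m x k \<ge> 0"
  by (auto simp: ext_def)

lemma conv_nonneg: "(\<forall>k\<le>m. x k \<ge> 0) \<Longrightarrow> conv m x i \<ge> 0"
  unfolding conv_def by (intro sum_nonneg mult_nonneg_nonneg ext_nonneg)

lemma conv_trunc: "conv m (\<lambda>k. if k \<le> m then x k else 0) = conv m x"
  by (auto simp: conv_def ext_def intro!: ext sum.cong)

lemma conv_sq:
  assumes "\<forall>k\<le>m. x k \<ge> 0" "k \<le> m"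
  shows "x k * x k \<le> conv m x (2*k)"
proof -
  have "ext m x (2*k - k) * ext m x k \<le> conv m x (2*k)"
    unfolding conv_def
    by (rule member_le_sum) (auto intro!: mult_nonneg_nonneg ext_nonneg assms(1))
  then show ?thesis using assms by (simp add: ext_def)
qed

lemma row_sum:
  assumes "i \<le> 2*m"
  shows "(\<Sum>j=0..m. (if j \<le> i \<and> i \<le> j + m then x (i - j) * x j else 0)) = conv m x i"
proof -
  have "(\<Sum>j=0..m. (if j \<le> i \<and> i \<le> j + m then x (i - j) * x j else 0))
        = (\<Sum>j\<in>{j\<in>{0..m}. j \<le> i \<and> i \<le> j + m}. x (i - j) * x j)"
    by (rule sum.inter_filter[symmetric]) simp
  also have "{j\<in>{0..m}. j \<le> i \<and> i \<le> j + m} = {j\<in>{0..i}. j \<le> m \<and> i - j \<le> m}"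
    by auto
  also have "(\<Sum>j\<in>{j\<in>{0..i}. j \<le> m \<and> i - j \<le> m}. x (i - j) * x j)
        = (\<Sum>j=0..i. (if j \<le> m \<and> i - j \<le> m then x (i - j) * x j else 0))"
    by (rule sum.inter_filter) simp
  also have "\<dots> = conv m x i"
    unfolding conv_def by (intro sum.cong) (auto simp: ext_def)
  finally show ?thesis .
qed

lemma idiv_mat:
  "idiv (matidx m) (\<lambda>(i,j). Y i j) (\<lambda>(i,j). W i j) = (\<Sum>i=0..2*m. \<Sum>j=0..m. ient (Y i j) (W i j))"
  unfolding idiv_def matidx_def sum.cartesian_product
  by (intro sum.cong) auto

lemma ient_pos_finite: "N > 0 \<Longrightarrow> ient M N \<noteq> \<infinity>"
  by (auto simp: ient_def)

theorem proposition3: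
  fixes m :: nat and y :: "nat \<Rightarrow> real"
  assumes "m \<ge> 1"
    and "\<forall>i\<le>2*m. y i \<ge> 0"
  shows "\<exists>x0 Y0 W0.
           (\<forall>k\<le>m. x0 k \<ge> 0) \<and> Y0 \<in> Ycal m y \<and> W0 \<in> Wcal m
         \<and> (\<forall>x. (\<forall>k\<le>m. x k \<ge> 0) \<longrightarrow>
                 idiv {0..2*m} y (conv m x0) \<le> idiv {0..2*m} y (conv m x))
         \<and> (\<forall>Y\<in>Ycal m y. \<forall>W\<in>Wcal m.
                 idiv (matidx m) (\<lambda>(i,j). Y0 i j) (\<lambda>(i,j). W0 i j)
                   \<le> idiv (matidx m) (\<lambda>(i,j). Y i j) (\<lambda>(i,j). W i j))
         \<and> idiv {0..2*m} y (conv m x0)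
             = idiv (matidx m) (\<lambda>(i,j). Y0 i j) (\<lambda>(i,j). W0 i j)"
proof -
  have ynn: "\<And>i. i \<le> 2*m \<Longrightarrow> y i \<ge> 0" using assms(2) by auto
  define F where "F = (\<lambda>x. idiv {0..2*m} y (conv m x))"
  have Fnn: "\<And>x. \<forall>k\<le>m. x k \<ge> 0 \<Longrightarrow> F x \<ge> 0"
    unfolding F_def idiv_def by (intro sum_nonneg ient_nonneg conv_nonneg ynn) auto
  define z where "z = (\<lambda>k::nat. if k \<le> m then (1::real) else 0)"
  have znn: "\<forall>k\<le>m. z k \<ge> 0" by (simp add: z_def)
  have convz: "conv m z i > 0" if i: "i \<le> 2*m" for i
  proof -
    have "ext m z (i - min i m) * ext m z (min i m) \<le> conv m z i"
      unfolding conv_def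
      by (rule member_le_sum) (auto intro!: mult_nonneg_nonneg ext_nonneg znn)
    moreover have "ext m z (i - min i m) * ext m z (min i m) = 1"
      using i by (auto simp: ext_def z_def)
    ultimately show ?thesis by simp
  qed
  have Fz: "F z \<noteq> \<infinity>"
    unfolding F_def idiv_def using convz ient_pos_finite by (auto simp: sum_Pinfty)
  obtain C where C: "F z = ereal C"
    using Fz Fnn[OF znn] by (cases "F z") auto
  define Sy where "Sy = (\<Sum>i=0..2*m. y i)"
  have ySy: "y i \<le> Sy" if "i \<le> 2*m" for i
    unfolding Sy_def by (rule member_le_sum) (use that ynn in auto)
  define R where "R = 2 * (1 + \<bar>C\<bar> + Sy)"
  have Sy0: "Sy \<ge> 0" unfolding Sy_def using ynn by (auto intro: sum_nonneg)
  have R1: "R \<ge> 2" unfolding R_def using Sy0 by simp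
  define B where "B = (\<lambda>k::nat. if k \<le> m then {0..R} else {0::real})"
  define K where "K = Pi\<^sub>E UNIV B"
  have compK: "compact K" unfolding K_def B_def by (intro compact_box) auto
  have zK: "z \<in> K" unfolding K_def B_def z_def using R1 by auto
  have Knn: "x k \<ge> 0" if "x \<in> K" for x k
  proof -
    have "x k \<in> B k" using that unfolding K_def by (auto simp: PiE_iff)
    then show ?thesis unfolding B_def by (auto split: if_splits)
  qed
  have contF: "continuous_on K F"
    unfolding continuous_on_def
  proof
    fix x assume xK: "x \<in> K"
    show "(F \<longlongrightarrow> F x) (at x within K)"
      unfolding F_def idiv_def
    proof (rule tendsto_sum_ereal)
      fix i assume i: "i \<in> {0..2*m}"
      have "continuous_on K (\<lambda>x. ient (y i) (conv m x i))"
      proof (rule continuous_on_compose2[OF ient_cont _ ])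
        show "continuous_on K (\<lambda>x. conv m x i)"
          using conv_cont continuous_on_subset by blast
        show "(\<lambda>x. conv m x i) ` K \<subseteq> {0..}"
          using Knn conv_nonneg by auto
      qed (use i ynn in auto)
      then show "((\<lambda>x. ient (y i) (conv m x i)) \<longlongrightarrow> ient (y i) (conv m x i)) (at x within K)"
        using xK continuous_on_def by blast
      show "ient (y i) (conv m x i) \<ge> 0"
        using i ynn Knn xK conv_nonneg ient_nonneg by auto
    qed auto
  qed
  obtain x0 where x0K: "x0 \<in> K" and x0min: "\<forall>x\<in>K. F x0 \<le> F x"
    using continuous_attains_inf[OF compK _ contF] zK by blast
  have x0nn: "\<And>k. x0 k \<ge> 0" using Knn x0K by auto
  have lowb: "ereal (x k * x k / 2 - y (2*k)) \<le> F x"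
    if xnn: "\<forall>k\<le>m. x k \<ge> 0" and k: "k \<le> m" for x k
  proof -
    have "ereal (x k * x k / 2 - y (2*k)) \<le> ereal (conv m x (2*k) / 2 - y (2*k))"
      using conv_sq[OF xnn k] by simp
    also have "\<dots> \<le> ient (y (2*k)) (conv m x (2*k))"
      using k ynn conv_nonneg[OF xnn] by (intro ient_lower) auto
    also have "\<dots> \<le> F x" unfolding F_def idiv_def
      by (rule single_le_sum_ereal[where f="\<lambda>i. ient (y i) (conv m x i)"])
         (use k ynn conv_nonneg[OF xnn] ient_nonneg in auto)
    finally show ?thesis .
  qed
  have glob: "F x0 \<le> F x" if xnn: "\<forall>k\<le>m. x k \<ge> 0" for x
  proof -
    define x' where "x' = (\<lambda>k. if k \<le> m then x k else 0)"
    have Fx': "F x' = F x" unfolding F_def x'_def conv_trunc ..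
    show ?thesis
    proof (cases "x' \<in> K")
      case True then show ?thesis using x0min Fx' by auto
    next
      case False
      then obtain k where k: "k \<le> m" and xk: "x k > R"
        unfolding K_def B_def x'_def using xnn by (auto simp: PiE_iff split: if_splits)
      have "x k * x k > x k * 1" using xk R1 by (intro mult_strict_left_mono) auto
      then have "x k * x k / 2 - y (2*k) > C" using xk ySy[of "2*k"] k unfolding R_def by auto
      then have "ereal C < ereal (x k * x k / 2 - y (2*k))" by simp
      then have "ereal C < F x" using lowb[OF xnn k] by (rule less_le_trans)
      then have "F z < F x" using C by simp
      moreover have "F x0 \<le> F z" using x0min zK by auto
      ultimately show ?thesis by simp
    qed
  qed
  define W0 where "W0 = (\<lambda>i j. if j \<le> i \<and> i \<le> j + m then x0 (i-j) * x0 j else 0)"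
  define Y0 where "Y0 = (\<lambda>i j. if conv m x0 i = 0 then (if j = min i m then y i else 0)
                                 else y i * W0 i j / conv m x0 i)"
  have W0nn: "\<And>i j. W0 i j \<ge> 0" unfolding W0_def using x0nn by auto
  have W0row: "\<And>i. i \<le> 2*m \<Longrightarrow> (\<Sum>j=0..m. W0 i j) = conv m x0 i"
    unfolding W0_def by (rule row_sum)
  have W0cal: "W0 \<in> Wcal m" unfolding Wcal_def
    by (rule CollectI, rule exI[of _ x0]) (simp add: W0_def x0nn)
  have cpos: "conv m x0 i \<ge> 0" for i using conv_nonneg x0nn by auto
  have Y0row: "(\<Sum>j=0..m. Y0 i j) = y i" if i: "i \<le> 2*m" for i
  proof (cases "conv m x0 i = 0")
    case True
    then show ?thesis unfolding Y0_def by simp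
  next
    case False
    have "(\<Sum>j=0..m. Y0 i j) = (\<Sum>j=0..m. y i * W0 i j / conv m x0 i)"
      unfolding Y0_def using False by simp
    also have "\<dots> = y i * (\<Sum>j=0..m. W0 i j) / conv m x0 i"
      by (simp add: sum_divide_distrib[symmetric] sum_distrib_left[symmetric])
    also have "\<dots> = y i" using W0row[OF i] False by simp
    finally show ?thesis .
  qed
  have Y0cal: "Y0 \<in> Ycal m y"
    unfolding Ycal_def
  proof (intro CollectI conjI allI impI)
    fix i j assume i: "i \<le> 2*m" and j: "j \<le> m"
    show "Y0 i j \<ge> 0" unfolding Y0_def using ynn[OF i] W0nn cpos by auto
    show "Y0 i j = 0" if "i < j \<or> i > j + m"
      using that i unfolding Y0_def W0_def by auto
  next
    fix i assume "i \<le> 2*m" then show "(\<Sum>j=0..m. Y0 i j) = y i" by (rule Y0row)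
  qed
  have rowgen: "F x \<le> idiv (matidx m) (\<lambda>(i,j). Y i j) (\<lambda>(i,j). W i j)"
    if Y: "Y \<in> Ycal m y" and xnn: "\<forall>k\<le>m. x k \<ge> 0"
      and W: "\<forall>i\<le>2*m. \<forall>j\<le>m. W i j = (if j \<le> i \<and> i \<le> j + m then x (i - j) * x j else 0)"
    for x Y W
  proof -
    have Ynn: "\<And>i j. i \<le> 2*m \<Longrightarrow> j \<le> m \<Longrightarrow> Y i j \<ge> 0" and Yrow: "\<And>i. i \<le> 2*m \<Longrightarrow> (\<Sum>j=0..m. Y i j) = y i"
      using Y unfolding Ycal_def by auto
    have Wnn: "\<And>i j. i \<le> 2*m \<Longrightarrow> j \<le> m \<Longrightarrow> W i j \<ge> 0"
      using W xnn by auto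
    have Wrow: "(\<Sum>j=0..m. W i j) = conv m x i" if i: "i \<le> 2*m" for i
    proof -
      have "(\<Sum>j=0..m. W i j) = (\<Sum>j=0..m. (if j \<le> i \<and> i \<le> j + m then x (i - j) * x j else 0))"
        using W i by (intro sum.cong) auto
      then show ?thesis using row_sum[OF i] by simp
    qed
    have "F x = (\<Sum>i=0..2*m. ient (\<Sum>j=0..m. Y i j) (\<Sum>j=0..m. W i j))"
      unfolding F_def idiv_def by (intro sum.cong) (auto simp: Yrow Wrow)
    also have "\<dots> \<le> (\<Sum>i=0..2*m. \<Sum>j=0..m. ient (Y i j) (W i j))"
      by (intro sum_mono ient_sum) (auto intro: Ynn Wnn)
    also have "\<dots> = idiv (matidx m) (\<lambda>(i,j). Y i j) (\<lambda>(i,j). W i j)"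
      by (simp add: idiv_mat)
    finally show ?thesis .
  qed
  have roweq: "(\<Sum>j=0..m. ient (Y0 i j) (W0 i j)) = ient (y i) (conv m x0 i)" if i: "i \<le> 2*m" for i
  proof -
    define c where "c = conv m x0 i"
    have c0: "c \<ge> 0" unfolding c_def by (rule cpos)
    have Wr: "(\<Sum>j=0..m. W0 i j) = c" unfolding c_def by (rule W0row[OF i])
    have Yr: "(\<Sum>j=0..m. Y0 i j) = y i" by (rule Y0row[OF i])
    consider "c = 0" "y i = 0" | "c = 0" "y i > 0" | "c > 0" "y i = 0" | "c > 0" "y i > 0"
      using c0 ynn[OF i] by (auto simp: less_eq_real_def)
    then show ?thesis
    proof cases
      case 1
      have W00: "\<forall>j\<in>{0..m}. W0 i j = 0"
        using Wr 1 W0nn sum_nonneg_eq_0_iff[of "{0..m}" "W0 i"] by auto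
      have "\<forall>j\<in>{0..m}. Y0 i j = 0" unfolding Y0_def using 1 c_def by auto
      then show ?thesis using W00 1 c_def by (simp add: ient_def)
    next
      case 2
      have j0: "min i m \<in> {0..m}" by auto
      have "Y0 i (min i m) = y i" unfolding Y0_def using 2 c_def by simp
      moreover have "W0 i (min i m) = 0"
      proof -
        have "W0 i (min i m) \<le> (\<Sum>j=0..m. W0 i j)"
          by (rule member_le_sum) (use W0nn in auto)
        then show ?thesis using Wr 2 W0nn[of i "min i m"] by simp
      qed
      ultimately have "ient (Y0 i (min i m)) (W0 i (min i m)) = \<infinity>" using 2 by (simp add: ient_def)
      then have "(\<Sum>j=0..m. ient (Y0 i j) (W0 i j)) = \<infinity>" using j0 by (auto simp: sum_Pinfty)
      then show ?thesis using 2 c_def by (simp add: ient_def)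
    next
      case 3
      have "\<forall>j. Y0 i j = 0" unfolding Y0_def using 3 c_def by auto
      then have "(\<Sum>j=0..m. ient (Y0 i j) (W0 i j)) = (\<Sum>j=0..m. ereal (W0 i j))"
        by (simp add: ient_def)
      also have "\<dots> = ereal c" using Wr by simp
      finally show ?thesis using 3 c_def by (simp add: ient_def)
    next
      case 4
      have tm: "ient (Y0 i j) (W0 i j) = ereal (Y0 i j * ln (y i / c) - Y0 i j + W0 i j)" for j
      proof (cases "W0 i j = 0")
        case True
        then have "Y0 i j = 0" unfolding Y0_def using 4 c_def by simp
        then show ?thesis using True by (simp add: ient_def)
      next
        case False
        then have Wp: "W0 i j > 0" using W0nn[of i j] by simp
        have Yeq: "Y0 i j = y i * W0 i j / c" unfolding Y0_def using 4 c_def by simp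
        then have Yp: "Y0 i j > 0" using Wp 4 by simp
        have "Y0 i j / W0 i j = y i / c" using Yeq Wp by simp
        then show ?thesis using Yp Wp by (simp add: ient_def)
      qed
      have "(\<Sum>j=0..m. ient (Y0 i j) (W0 i j)) = ereal (\<Sum>j=0..m. Y0 i j * ln (y i / c) - Y0 i j + W0 i j)"
        by (simp add: tm)
      also have "(\<Sum>j=0..m. Y0 i j * ln (y i / c) - Y0 i j + W0 i j)
          = (\<Sum>j=0..m. Y0 i j) * ln (y i / c) - (\<Sum>j=0..m. Y0 i j) + (\<Sum>j=0..m. W0 i j)"
        by (simp add: sum.distrib sum_subtractf sum_distrib_right)
      also have "\<dots> = y i * ln (y i / c) - y i + c" using Wr Yr by simp
      finally show ?thesis using 4 c_def by (simp add: ient_def)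
    qed
  qed
  have eq: "F x0 = idiv (matidx m) (\<lambda>(i,j). Y0 i j) (\<lambda>(i,j). W0 i j)"
    unfolding F_def idiv_mat unfolding idiv_def by (intro sum.cong) (auto simp: roweq)
  have x0nnm: "\<forall>k\<le>m. x0 k \<ge> 0" using x0nn by auto
  have minYW: "idiv (matidx m) (\<lambda>(i,j). Y0 i j) (\<lambda>(i,j). W0 i j)
                 \<le> idiv (matidx m) (\<lambda>(i,j). Y i j) (\<lambda>(i,j). W i j)"
    if Y: "Y \<in> Ycal m y" and W: "W \<in> Wcal m" for Y W
  proof -
    obtain x where xnn: "\<forall>k\<le>m. x k \<ge> 0"
      and Wx: "\<forall>i\<le>2*m. \<forall>j\<le>m. W i j = (if j \<le> i \<and> i \<le> j + m then x (i - j) * x j else 0)"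
      using W unfolding Wcal_def by auto
    have "F x0 \<le> F x" by (rule glob[OF xnn])
    also have "\<dots> \<le> idiv (matidx m) (\<lambda>(i,j). Y i j) (\<lambda>(i,j). W i j)"
      by (rule rowgen[OF Y xnn Wx])
    finally show ?thesis using eq by simp
  qed
  show ?thesis
    apply (rule exI[of _ x0], rule exI[of _ Y0], rule exI[of _ W0])
    using x0nnm Y0cal W0cal glob minYW eq unfolding F_def by blast
qed

end
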